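(* Let $\Sigma=(X,U,F)$ be a system, $Q\subset X$ a controlled invariant set with $\sharp Q<\infty$, and $V\subset U$ a finite cover of $Q$ such that: (C.1) $Q_a\cap Q_b=\emptyset$ for all distinct $a,b\in V$; (C.2) for all $a,b\in V$ with $M_{ab}=1$ there exists $K\subset Q_a$ such that $Q_b\subset F(K,a)$; (C.3) $Q_c=\emptyset$ for every $c\in U\setminus V$. Let $\mathcal{A}_V=\{Q_a:a\in V\}$ and $G_V(Q_a)=a$, and suppose $(\mathcal{C},G_{\mathcal{C}})$ is the atom refinement of $(\mathcal{A}_V,G_V)$. Then \[h^{fb}_{inv}(Q)=h_{inv}(\mathcal{C},G_{\mathcal{C}}).\]
   Context: A system is a triple $\Sigma=(X,U,F)$ where $X,U$ are nonempty sets and $F:X\times U\rightrightarrows X$ is a set-valued map with $F(x,u)\neq\emptyset$ for all $(x,u)$; for $A\subset X$, $F(A,u)=\bigcup_{x\in A}F(x,u)$. $Q\subset X$ is controlled invariant if for every $x\in Q$ there is $u\in U$ with $F(x,u)\subset Q$. For $u\in U$ put $Q_u=\{x\in Q:F(x,u)\subset Q\}$. A set $V\subset U$ is a cover of $Q$ if $Q\subset\bigcup_{a\in V}Q_a$; the admissible matrix $M_{Q,V}=(M_{ab})_{a,b\in V}$ has $M_{ab}=1$ if there exists $x\in Q_a$ with $F(x,a)\cap Q_b\neq\emptyset$, and $0$ otherwise. An invariant cover of $Q$ is a pair $(\mathcal{A},G)$ where $\mathcal{A}$ is a finite cover of $Q$ (by subsets of $Q$) and $G:\mathcal{A}\to U$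 satisfies $F(A,G(A))\subset Q$ for all $A\in\mathcal{A}$. For $\mathcal{S}\subset\mathcal{A}^n$, $\alpha=\alpha(0)\cdots\alpha(n-1)\in\mathcal{S}$ and integer $0\le t<n-1$, let $P(\alpha|_{[0,t]})=\{A\in\mathcal{A}:\exists\hat\alpha\in\mathcal{S},\ \hat\alpha|_{[0,t]}=\alpha|_{[0,t]},\ A=\hat\alpha(t+1)\}$, and $P(\alpha|_{[0,n-1]})=P(\alpha)=\{\hat\alpha(0):\hat\alpha\in\mathcal{S}\}$. $\mathcal{S}$ is $(n,Q)$-spanning in $(\mathcal{A},G)$ if (1) the elements of $P(\alpha)$ cover $Q$, and (2) for every $\alpha\in\mathcal{S}$ and $0\le t<n-1$, $F(\alpha(t),G(\alpha(t)))\subset\bigcup_{A'\in P(\alpha|_{[0,t]})}A'$. Let $N(\mathcal{S})=\max_{\alpha\in\mathcal{S}}\prod_{t=0}^{n-1}\sharp P(\alpha|_{[0,t]})$, $r_{inv}(n,Q,\mathcal{A},G)=\min\{N(\mathcal{S}):\mathcal{S}\ (n,Q)\text{-spanning in }(\mathcal{A},G)\}$, $h_{inv}(\mathcal{A},G)=\lim_{n\to\infty}\frac1n\log r_{inv}(n,Q,\mathcal{A},G)$ ($\log$ base $2$), and the invariance feedback entropy $h^{fb}_{inv}(Q)=\inf_{(\mathcal{A},G)}h_{inv}(\mathcal{A},G)$ over all invariant covers of $Q$. A refinement of $(\mathcal{A}_V,G_V)$ is a pair $(\mathcal{B},G_{\mathcal{B}})$ where $\mathcal{B}$ is a cover of $Q$,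 every $B\in\mathcal{B}$ is contained in some $A\in\mathcal{A}_V$, and $G_{\mathcal{B}}(B)=G_V(A)$. A refinement $(\mathcal{C},G_{\mathcal{C}})$ is the atom refinement of $(\mathcal{A}_V,G_V)$ if $\mathcal{C}=\{\{x\}:x\in Q\}$ (so $G_{\mathcal{C}}(\{x\})=a$ for the unique $a\in V$ with $x\in Q_a$) and $\sharp\big(F(x,a)\cap Q_b\big)\le1$ for all $a,b\in V$ and all $x\in Q_a$. *)

theory Defs
  imports Complex_Main
begin

text \<open>A system on state type 'x and input type 'u: F x u is the (nonempty) set of successors.\<close>

definition Fimg :: "('x \<Rightarrow> 'u \<Rightarrow> 'x set) \<Rightarrow> 'x set \<Rightarrow> 'u \<Rightarrow> 'x set" where
  "Fimg F A u = (\<Union>x\<in>A. F x u)"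

definition controlled_invariant :: "('x \<Rightarrow> 'u \<Rightarrow> 'x set) \<Rightarrow> 'x set \<Rightarrow> bool" where
  "controlled_invariant F Q \<longleftrightarrow> (\<forall>x\<in>Q. \<exists>u. F x u \<subseteq> Q)"

definition Qsub :: "('x \<Rightarrow> 'u \<Rightarrow> 'x set) \<Rightarrow> 'x set \<Rightarrow> 'u \<Rightarrow> 'x set" where
  "Qsub F Q u = {x\<in>Q. F x u \<subseteq> Q}"

definition is_cover :: "('x \<Rightarrow> 'u \<Rightarrow> 'x set) \<Rightarrow> 'x set \<Rightarrow> 'u set \<Rightarrow> bool" where
  "is_cover F Q V \<longleftrightarrow> Q \<subseteq> (\<Union>a\<in>V. Qsub F Q a)"

definition admissible :: "('x \<Rightarrow> 'u \<Rightarrow> 'x set) \<Rightarrow> 'x set \<Rightarrow> 'u \<Rightarrow> 'u \<Rightarrow> bool" where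
  "admissible F Q a b \<longleftrightarrow> (\<exists>x\<in>Qsub F Q a. F x a \<inter> Qsub F Q b \<noteq> {})"

definition invariant_cover ::
  "('x \<Rightarrow> 'u \<Rightarrow> 'x set) \<Rightarrow> 'x set \<Rightarrow> 'x set set \<Rightarrow> ('x set \<Rightarrow> 'u) \<Rightarrow> bool" where
  "invariant_cover F Q \<A> G \<longleftrightarrow>
     finite \<A> \<and> (\<forall>A\<in>\<A>. A \<subseteq> Q) \<and> Q \<subseteq> \<Union>\<A> \<and> (\<forall>A\<in>\<A>. Fimg F A (G A) \<subseteq> Q)"

text \<open>Sequences alpha = alpha(0)...alpha(n-1) in A^n are lists of length n.
  P S n alpha t is P(alpha|[0,t]); for t = n-1 it is the set of initial elements.\<close>

definition Pset :: "'a list set \<Rightarrow> nat \<Rightarrow> 'a list \<Rightarrow> nat \<Rightarrow> 'a set" where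
  "Pset S n \<alpha> t =
     (if Suc t < n
      then {\<beta> ! Suc t | \<beta>. \<beta> \<in> S \<and> take (Suc t) \<beta> = take (Suc t) \<alpha>}
      else (\<lambda>\<beta>. \<beta> ! 0) ` S)"

definition spanning ::
  "('x \<Rightarrow> 'u \<Rightarrow> 'x set) \<Rightarrow> 'x set \<Rightarrow> 'x set set \<Rightarrow> ('x set \<Rightarrow> 'u) \<Rightarrow> nat \<Rightarrow> 'x set list set \<Rightarrow> bool" where
  "spanning F Q \<A> G n S \<longleftrightarrow>
     S \<subseteq> {\<alpha>. length \<alpha> = n \<and> set \<alpha> \<subseteq> \<A>} \<and>
     Q \<subseteq> \<Union>((\<lambda>\<beta>. \<beta> ! 0) ` S) \<and>
     (\<forall>\<alpha>\<in>S. \<forall>t. Suc t < n \<longrightarrow> Fimg F (\<alpha> ! t) (G (\<alpha> ! t)) \<subseteq> \<Union>(Pset S n \<alpha> t))"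

definition Nspan :: "'a list set \<Rightarrow> nat \<Rightarrow> nat" where
  "Nspan S n = (if S = {} then 0 else Max ((\<lambda>\<alpha>. \<Prod>t<n. card (Pset S n \<alpha> t)) ` S))"

definition r_inv ::
  "('x \<Rightarrow> 'u \<Rightarrow> 'x set) \<Rightarrow> 'x set \<Rightarrow> nat \<Rightarrow> 'x set set \<Rightarrow> ('x set \<Rightarrow> 'u) \<Rightarrow> nat" where
  "r_inv F Q n \<A> G = Min {Nspan S n | S. spanning F Q \<A> G n S}"

definition h_inv ::
  "('x \<Rightarrow> 'u \<Rightarrow> 'x set) \<Rightarrow> 'x set \<Rightarrow> 'x set set \<Rightarrow> ('x set \<Rightarrow> 'u) \<Rightarrow> real" where
  "h_inv F Q \<A> G = lim (\<lambda>n. log 2 (real (r_inv F Q n \<A> G)) / real n)"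

definition h_fb_inv :: "('x \<Rightarrow> 'u \<Rightarrow> 'x set) \<Rightarrow> 'x set \<Rightarrow> real" where
  "h_fb_inv F Q = Inf {h_inv F Q \<A> G | \<A> G. invariant_cover F Q \<A> G}"

end

theory Submission
  imports Defs
begin


lemma prod_split_add:
  "(\<Prod>t<n+m. f t) = (\<Prod>t<n. f t) * (\<Prod>s<m. f (n+s)) " for f :: "nat \<Rightarrow> nat"
  by (induction m) (simp_all add: mult.assoc)

lemma fekete:
  fixes u :: "nat \<Rightarrow> real"
  assumes nonneg: "\<And>n. n \<ge> 1 \<Longrightarrow> u n \<ge> 0"
    and sub: "\<And>n m. n \<ge> 1 \<Longrightarrow> m \<ge> 1 \<Longrightarrow> u (n+m) \<le> u n + u m"
  shows "convergent (\<lambda>n. u n / n)"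
proof -
  define X where "X = (\<lambda>n. u n / n) ` {1..}"
  define L where "L = Inf X"
  have Xne: "X \<noteq> {}" unfolding X_def by auto
  have bdd: "bdd_below X" unfolding X_def
    by (rule bdd_belowI[of _ 0]) (auto intro!: divide_nonneg_nonneg nonneg)
  have lower: "L \<le> u n / n" if "n \<ge> 1" for n
    unfolding L_def by (rule cInf_lower[OF _ bdd]) (use that in \<open>auto simp: X_def\<close>)
  have iter: "u (q*m + r) \<le> q * u m + u r" if "r \<ge> 1" "m \<ge> 1" for q m r
  proof (induction q)
    case 0 then show ?case by simp
  next
    case (Suc q)
    have "u (Suc q * m + r) = u (m + (q*m + r))" by (simp add: add.assoc)
    also have "\<dots> \<le> u m + u (q*m+r)" using sub[of m "q*m+r"] that by simp
    also have "\<dots> \<le> u m + (q * u m + u r)" using Suc by simp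
    finally show ?case by (simp add: algebra_simps)
  qed
  have "(\<lambda>n. u n / n) \<longlonglongrightarrow> L"
  proof (rule LIMSEQ_I)
    fix e :: real assume e: "0 < e"
    have "L < L + e/2" using e by simp
    then obtain y where "y \<in> X" "y < L + e/2"
      using cInf_lessD[OF Xne] unfolding L_def by blast
    then obtain m where m1: "m \<ge> 1" and mlt: "u m / m < L + e/2" unfolding X_def by auto
    define M where "M = Max (u ` {1..m})"
    have Mge: "u r \<le> M" if "r \<in> {1..m}" for r
      unfolding M_def using that by (intro Max_ge) auto
    have M0: "0 \<le> M" using Mge[of 1] nonneg[of 1] m1 by auto
    obtain no :: nat where no: "real no > 2*M/e" using reals_Archimedean2 by blast
    show "\<exists>no. \<forall>n\<ge>no. norm (u n / n - L) < e"
    proof (intro exI[of _ "no+1"] allI impI)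
      fix n assume n: "n \<ge> no + 1"
      define q where "q = (n-1) div m"
      define r where "r = (n-1) mod m + 1"
      have "n - 1 = q*m + (n-1) mod m" unfolding q_def by simp
      hence nqr: "n = q*m + r" unfolding r_def using n by linarith
      have r1: "r \<in> {1..m}" unfolding r_def using m1 
        by (simp add: Suc_leI)
      have npos: "real n > 0" using n by simp
      have "u n \<le> q * u m + u r" using iter[of r m q] r1 m1 nqr by simp
      also have "\<dots> \<le> q * u m + M" using Mge[OF r1] by simp
      also have "q * u m = real (q*m) * (u m / m)" using m1 by simp
      also have "\<dots> \<le> real n * (u m / m)"
        using nqr nonneg[OF m1] m1 by (intro mult_right_mono) (auto intro: divide_nonneg_nonneg)
      finally have "u n \<le> real n * (u m / m) + M" by simp
      hence "u n / n \<le> u m / m + M / n" using npos by (simp add: field_simps)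
      moreover have "M / n < e/2"
      proof -
        have "real n > 2*M/e" using no n by simp
        hence "2*M < e * real n" using e by (simp add: field_simps)
        thus ?thesis using npos e by (simp add: field_simps)
      qed
      ultimately have "u n / n < L + e" using mlt by linarith
      moreover have "L \<le> u n / n" using lower n by simp
      ultimately show "norm (u n / n - L) < e" by simp
    qed
  qed
  thus ?thesis by (rule convergentI)
qed



lemma Pset_lt: "Suc t < n \<Longrightarrow> Pset S n \<alpha> t = {\<beta> ! Suc t | \<beta>. \<beta> \<in> S \<and> take (Suc t) \<beta> = take (Suc t) \<alpha>}"
  by (simp add: Pset_def)
lemma Pset_ge: "\<not> Suc t < n \<Longrightarrow> Pset S n \<alpha> t = (\<lambda>\<beta>. \<beta>!0) ` S"
  by (simp add: Pset_def)

lemma span_lists: "spanning F Q \<A> G n S \<Longrightarrow> \<alpha> \<in> S \<Longrightarrow> length \<alpha> = n \<and> set \<alpha> \<subseteq> \<A>"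
  unfolding spanning_def by auto

lemma finite_span: "finite \<A> \<Longrightarrow> spanning F Q \<A> G n S \<Longrightarrow> finite S"
  by (rule finite_subset[OF _ finite_lists_length_eq[of \<A> n]]) (auto dest: span_lists)

lemma finite_Nspans: "finite \<A> \<Longrightarrow> finite {Nspan S n | S. spanning F Q \<A> G n S}"
proof -
  assume fin: "finite \<A>"
  have "{S. spanning F Q \<A> G n S} \<subseteq> Pow {\<alpha>. set \<alpha> \<subseteq> \<A> \<and> length \<alpha> = n}"
    by (auto dest: span_lists)
  hence "finite {S. spanning F Q \<A> G n S}"
    using finite_lists_length_eq[OF fin] by (meson finite_Pow_iff finite_subset)
  moreover have "{Nspan S n | S. spanning F Q \<A> G n S} = (\<lambda>S. Nspan S n) ` {S. spanning F Q \<A> G n S}"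
    by auto
  ultimately show ?thesis by simp
qed

lemma r_inv_le: "finite \<A> \<Longrightarrow> spanning F Q \<A> G n S \<Longrightarrow> r_inv F Q n \<A> G \<le> Nspan S n"
  unfolding r_inv_def by (rule Min_le[OF finite_Nspans]) auto

lemma r_inv_attained: "finite \<A> \<Longrightarrow> spanning F Q \<A> G n S0 \<Longrightarrow>
   \<exists>S. spanning F Q \<A> G n S \<and> r_inv F Q n \<A> G = Nspan S n"
proof -
  assume fin: "finite \<A>" and s0: "spanning F Q \<A> G n S0"
  have "Min {Nspan S n | S. spanning F Q \<A> G n S} \<in> {Nspan S n | S. spanning F Q \<A> G n S}"
    by (rule Min_in[OF finite_Nspans[OF fin]]) (use s0 in auto)
  thus ?thesis unfolding r_inv_def by auto
qed

lemma inv_cover_sub: "invariant_cover F Q \<A> G \<Longrightarrow> A \<in> \<A> \<Longrightarrow> A \<subseteq> Qsub F Q (G A)"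
  unfolding invariant_cover_def Qsub_def Fimg_def by blast

lemma spanning_all:
  assumes ic: "invariant_cover F Q \<A> G" and n: "0 < n"
  shows "spanning F Q \<A> G n {\<alpha>. length \<alpha> = n \<and> set \<alpha> \<subseteq> \<A>}"
  unfolding spanning_def
proof (intro conjI ballI allI impI)
  show "{\<alpha>. length \<alpha> = n \<and> set \<alpha> \<subseteq> \<A>} \<subseteq> {\<alpha>. length \<alpha> = n \<and> set \<alpha> \<subseteq> \<A>}" by simp
  show "Q \<subseteq> \<Union> ((\<lambda>\<beta>. \<beta> ! 0) ` {\<alpha>. length \<alpha> = n \<and> set \<alpha> \<subseteq> \<A>})"
  proof
    fix x assume "x \<in> Q"
    then obtain A where A: "A \<in> \<A>" "x \<in> A" using ic unfolding invariant_cover_def by blast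
    have "replicate n A \<in> {\<alpha>. length \<alpha> = n \<and> set \<alpha> \<subseteq> \<A>}" using A by auto
    moreover have "replicate n A ! 0 = A" using n by simp
    ultimately show "x \<in> \<Union> ((\<lambda>\<beta>. \<beta> ! 0) ` {\<alpha>. length \<alpha> = n \<and> set \<alpha> \<subseteq> \<A>})"
      using A by force
  qed
  fix \<alpha> t assume \<alpha>: "\<alpha> \<in> {\<alpha>. length \<alpha> = n \<and> set \<alpha> \<subseteq> \<A>}" and t: "Suc t < n"
  have "\<alpha> ! t \<in> \<A>" using \<alpha> t by auto
  hence "Fimg F (\<alpha> ! t) (G (\<alpha> ! t)) \<subseteq> \<Union>\<A>" using ic unfolding invariant_cover_def by blast
  also have "\<Union>\<A> \<subseteq> \<Union> (Pset {\<alpha>. length \<alpha> = n \<and> set \<alpha> \<subseteq> \<A>} n \<alpha> t)"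
  proof
    fix y assume "y \<in> \<Union>\<A>"
    then obtain A where A: "A \<in> \<A>" "y \<in> A" by blast
    define \<beta> where "\<beta> = take (Suc t) \<alpha> @ replicate (n - Suc t) A"
    have l: "length (take (Suc t) \<alpha>) = Suc t" using \<alpha> t by simp
    have "\<beta> \<in> {\<alpha>. length \<alpha> = n \<and> set \<alpha> \<subseteq> \<A>}" unfolding \<beta>_def using \<alpha> t A
      by (auto dest: in_set_takeD)
    moreover have "take (Suc t) \<beta> = take (Suc t) \<alpha>" unfolding \<beta>_def using l by simp
    moreover have "\<beta> ! Suc t = A" unfolding \<beta>_def using l t by (simp add: nth_append)
    ultimately have "A \<in> Pset {\<alpha>. length \<alpha> = n \<and> set \<alpha> \<subseteq> \<A>} n \<alpha> t"
      unfolding Pset_lt[OF t] by blast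
    thus "y \<in> \<Union> (Pset {\<alpha>. length \<alpha> = n \<and> set \<alpha> \<subseteq> \<A>} n \<alpha> t)" using A by blast
  qed
  finally show "Fimg F (\<alpha> ! t) (G (\<alpha> ! t)) \<subseteq> \<Union> (Pset {\<alpha>. length \<alpha> = n \<and> set \<alpha> \<subseteq> \<A>} n \<alpha> t)" .
qed

lemma Pset_sub: "spanning F Q \<A> G n S \<Longrightarrow> t < n \<Longrightarrow> Pset S n \<alpha> t \<subseteq> \<A>"
proof -
  assume s: "spanning F Q \<A> G n S" and t: "t < n"
  show ?thesis
  proof (cases "Suc t < n")
    case True
    show ?thesis unfolding Pset_lt[OF True] using span_lists[OF s] True by fastforce
  next
    case False
    have "\<beta> ! 0 \<in> \<A>" if "\<beta> \<in> S" for \<beta>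
      using span_lists[OF s that] t by (metis gr_zeroI less_nat_zero_code nth_mem subsetD)
    thus ?thesis unfolding Pset_ge[OF False] by blast
  qed
qed

lemma Pset_ne: "\<alpha> \<in> S \<Longrightarrow> Pset S n \<alpha> t \<noteq> {}"
  by (cases "Suc t < n") (auto simp: Pset_lt Pset_ge)

lemma Pset_card: "finite \<A> \<Longrightarrow> spanning F Q \<A> G n S \<Longrightarrow> \<alpha> \<in> S \<Longrightarrow> t < n \<Longrightarrow> 1 \<le> card (Pset S n \<alpha> t)"
  by (metis One_nat_def Pset_ne Pset_sub Suc_leI card_gt_0_iff finite_subset)

lemma Nspan_ge: "finite \<A> \<Longrightarrow> spanning F Q \<A> G n S \<Longrightarrow> \<alpha> \<in> S \<Longrightarrow>
   (\<Prod>t<n. card (Pset S n \<alpha> t)) \<le> Nspan S n"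
  unfolding Nspan_def using finite_span[of \<A> F Q G n S] by (auto intro!: Max_ge)

lemma Nspan_pos: "finite \<A> \<Longrightarrow> spanning F Q \<A> G n S \<Longrightarrow> S \<noteq> {} \<Longrightarrow> 1 \<le> Nspan S n"
proof -
  assume a: "finite \<A>" "spanning F Q \<A> G n S" "S \<noteq> {}"
  then obtain \<alpha> where \<alpha>: "\<alpha> \<in> S" by blast
  have "1 \<le> (\<Prod>t<n. card (Pset S n \<alpha> t))"
    by (rule prod_ge_1) (use Pset_card[OF a(1,2) \<alpha>] in auto)
  also have "\<dots> \<le> Nspan S n" by (rule Nspan_ge[OF a(1,2) \<alpha>])
  finally show ?thesis .
qed

lemma span_ne: "spanning F Q \<A> G n S \<Longrightarrow> Q \<noteq> {} \<Longrightarrow> S \<noteq> {}"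
  unfolding spanning_def by auto

lemma r_inv_pos:
  assumes ic: "invariant_cover F Q \<A> G" and n: "0 < n" and Q: "Q \<noteq> {}"
  shows "1 \<le> r_inv F Q n \<A> G"
proof -
  have fin: "finite \<A>" using ic unfolding invariant_cover_def by simp
  obtain S where S: "spanning F Q \<A> G n S" "r_inv F Q n \<A> G = Nspan S n"
    using r_inv_attained[OF fin spanning_all[OF ic n]] by blast
  show ?thesis using Nspan_pos[OF fin S(1) span_ne[OF S(1) Q]] S(2) by simp
qed



lemma submult:
  assumes ic: "invariant_cover F Q \<A> G" and Q: "Q \<noteq> {}" and n: "0 < n" and m: "0 < m"
  shows "r_inv F Q (n+m) \<A> G \<le> r_inv F Q n \<A> G * r_inv F Q m \<A> G"
proof -
  have fin: "finite \<A>" using ic unfolding invariant_cover_def by simp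
  obtain S1 where S1: "spanning F Q \<A> G n S1" "r_inv F Q n \<A> G = Nspan S1 n"
    using r_inv_attained[OF fin spanning_all[OF ic n]] by blast
  obtain S2 where S2: "spanning F Q \<A> G m S2" "r_inv F Q m \<A> G = Nspan S2 m"
    using r_inv_attained[OF fin spanning_all[OF ic m]] by blast
  have l1: "length \<alpha> = n" "set \<alpha> \<subseteq> \<A>" if "\<alpha> \<in> S1" for \<alpha> using span_lists[OF S1(1) that] by auto
  have l2: "length \<beta> = m" "set \<beta> \<subseteq> \<A>" if "\<beta> \<in> S2" for \<beta> using span_lists[OF S2(1) that] by auto
  obtain \<beta>0 where \<beta>0: "\<beta>0 \<in> S2" using span_ne[OF S2(1) Q] by blast
  define S where "S = {\<alpha> @ \<beta> | \<alpha> \<beta>. \<alpha> \<in> S1 \<and> \<beta> \<in> S2}"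
  have tk: "take k (\<alpha> @ \<beta>) = take k \<alpha>" if "\<alpha> \<in> S1" "k \<le> n" for \<alpha> \<beta> k
    using l1[OF that(1)] that(2) by simp
  have tk2: "take (n+k) (\<alpha> @ \<beta>) = \<alpha> @ take k \<beta>" if "\<alpha> \<in> S1" for \<alpha> \<beta> k
    using l1[OF that(1)] by simp
  have nth1: "(\<alpha> @ \<beta>) ! k = \<alpha> ! k" if "\<alpha> \<in> S1" "k < n" for \<alpha> \<beta> k
    using l1[OF that(1)] that(2) by (simp add: nth_append)
  have nth2: "(\<alpha> @ \<beta>) ! (n+k) = \<beta> ! k" if "\<alpha> \<in> S1" for \<alpha> \<beta> k
    using l1[OF that(1)] by (simp add: nth_append)
  have first: "(\<lambda>\<gamma>. \<gamma> ! 0) ` S = (\<lambda>\<gamma>. \<gamma> ! 0) ` S1"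
  proof
    show "(\<lambda>\<gamma>. \<gamma> ! 0) ` S \<subseteq> (\<lambda>\<gamma>. \<gamma> ! 0) ` S1"
      unfolding S_def using nth1 n by auto
    show "(\<lambda>\<gamma>. \<gamma> ! 0) ` S1 \<subseteq> (\<lambda>\<gamma>. \<gamma> ! 0) ` S"
    proof
      fix A assume "A \<in> (\<lambda>\<gamma>. \<gamma> ! 0) ` S1"
      then obtain \<alpha> where "\<alpha> \<in> S1" "A = \<alpha> ! 0" by blast
      moreover have "\<alpha> @ \<beta>0 \<in> S" unfolding S_def using \<open>\<alpha> \<in> S1\<close> \<beta>0 by blast
      moreover have "(\<alpha> @ \<beta>0) ! 0 = \<alpha> ! 0" using nth1[of \<alpha> 0 \<beta>0] n \<open>\<alpha> \<in> S1\<close> by simp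
      ultimately show "A \<in> (\<lambda>\<gamma>. \<gamma> ! 0) ` S" by (metis image_eqI)
    qed
  qed
  have PA: "Pset S (n+m) (\<alpha>@\<beta>) t = Pset S1 n \<alpha> t" if "\<alpha> \<in> S1" "Suc t < n" for \<alpha> \<beta> t
  proof -
    have t': "Suc t < n + m" using that by simp
    show ?thesis unfolding Pset_lt[OF t'] Pset_lt[OF that(2)]
    proof (intro equalityI subsetI)
      fix A assume "A \<in> {\<gamma> ! Suc t |\<gamma>. \<gamma> \<in> S \<and> take (Suc t) \<gamma> = take (Suc t) (\<alpha> @ \<beta>)}"
      then obtain \<alpha>' \<beta>' where "\<alpha>' \<in> S1" "\<beta>' \<in> S2" "A = (\<alpha>'@\<beta>') ! Suc t"
        "take (Suc t) (\<alpha>'@\<beta>') = take (Suc t) (\<alpha> @ \<beta>)" unfolding S_def by blast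
      note a = this
      have "take (Suc t) \<alpha>' = take (Suc t) \<alpha>"
        using a(4) tk[of \<alpha>' "Suc t" \<beta>'] tk[of \<alpha> "Suc t" \<beta>] a(1) that by simp
      moreover have "A = \<alpha>' ! Suc t" using a(3) nth1[of \<alpha>' "Suc t" \<beta>'] a(1) that by simp
      ultimately show "A \<in> {\<beta> ! Suc t |\<beta>. \<beta> \<in> S1 \<and> take (Suc t) \<beta> = take (Suc t) \<alpha>}"
        using a(1) by blast
    next
      fix A assume "A \<in> {\<beta> ! Suc t |\<beta>. \<beta> \<in> S1 \<and> take (Suc t) \<beta> = take (Suc t) \<alpha>}"
      then obtain \<alpha>' where a: "\<alpha>' \<in> S1" "A = \<alpha>' ! Suc t" "take (Suc t) \<alpha>' = take (Suc t) \<alpha>" by blast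
      have "\<alpha>' @ \<beta>0 \<in> S" unfolding S_def using a \<beta>0 by blast
      moreover have "take (Suc t) (\<alpha>' @ \<beta>0) = take (Suc t) (\<alpha> @ \<beta>)"
      proof -
        have k: "Suc t \<le> n" using that by simp
        show ?thesis by (subst tk[OF a(1) k], subst tk[OF that(1) k]) (rule a(3))
      qed
      moreover have "A = (\<alpha>' @ \<beta>0) ! Suc t" using a nth1 that by simp
      ultimately show "A \<in> {\<gamma> ! Suc t |\<gamma>. \<gamma> \<in> S \<and> take (Suc t) \<gamma> = take (Suc t) (\<alpha> @ \<beta>)}" by blast
    qed
  qed
  have PB: "Pset S (n+m) (\<alpha>@\<beta>) (n-1) = (\<lambda>\<gamma>. \<gamma> ! 0) ` S2" if "\<alpha> \<in> S1" for \<alpha> \<beta>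
  proof -
    have t': "Suc (n-1) < n + m" using n m by simp
    have sn: "Suc (n-1) = n" using n by simp
    show ?thesis unfolding Pset_lt[OF t'] sn
    proof (intro equalityI subsetI)
      fix A assume "A \<in> {\<gamma> ! n |\<gamma>. \<gamma> \<in> S \<and> take n \<gamma> = take n (\<alpha> @ \<beta>)}"
      then obtain \<alpha>' \<beta>' where "\<alpha>' \<in> S1" "\<beta>' \<in> S2" "A = (\<alpha>'@\<beta>') ! n" unfolding S_def by blast
      thus "A \<in> (\<lambda>\<gamma>. \<gamma> ! 0) ` S2" using nth2[of \<alpha>' \<beta>' 0] by auto
    next
      fix A assume "A \<in> (\<lambda>\<gamma>. \<gamma> ! 0) ` S2"
      then obtain \<beta>' where b: "\<beta>' \<in> S2" "A = \<beta>' ! 0" by blast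
      have "\<alpha> @ \<beta>' \<in> S" unfolding S_def using b that by blast
      moreover have "take n (\<alpha> @ \<beta>') = take n (\<alpha> @ \<beta>)" using l1[OF that] by simp
      moreover have "A = (\<alpha> @ \<beta>') ! n" using nth2[of \<alpha> \<beta>' 0] b that by simp
      ultimately show "A \<in> {\<gamma> ! n |\<gamma>. \<gamma> \<in> S \<and> take n \<gamma> = take n (\<alpha> @ \<beta>)}" by blast
    qed
  qed
  have PC: "Pset S (n+m) (\<alpha>@\<beta>) (n+s) = Pset S2 m \<beta> s" if "\<alpha> \<in> S1" "\<beta> \<in> S2" "Suc s < m" for \<alpha> \<beta> s
  proof -
    have t': "Suc (n+s) < n + m" using that by simp
    have e: "Suc (n+s) = n + Suc s" by simp
    show ?thesis unfolding Pset_lt[OF t'] Pset_lt[OF that(3)] e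
    proof (intro equalityI subsetI)
      fix A assume "A \<in> {\<gamma> ! (n + Suc s) |\<gamma>. \<gamma> \<in> S \<and> take (n + Suc s) \<gamma> = take (n + Suc s) (\<alpha> @ \<beta>)}"
      then obtain \<alpha>' \<beta>' where a: "\<alpha>' \<in> S1" "\<beta>' \<in> S2" "A = (\<alpha>'@\<beta>') ! (n + Suc s)"
        "take (n + Suc s) (\<alpha>'@\<beta>') = take (n + Suc s) (\<alpha> @ \<beta>)" unfolding S_def by blast
      hence "\<alpha>' @ take (Suc s) \<beta>' = \<alpha> @ take (Suc s) \<beta>" using l1[OF a(1)] l1[OF that(1)] by simp
      hence "take (Suc s) \<beta>' = take (Suc s) \<beta>" using l1 a(1) that(1) by (simp add: append_eq_append_conv)
      moreover have "A = \<beta>' ! Suc s" using a(3) l1[OF a(1)] by (simp add: nth_append)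
      ultimately show "A \<in> {\<beta>' ! Suc s |\<beta>'. \<beta>' \<in> S2 \<and> take (Suc s) \<beta>' = take (Suc s) \<beta>}"
        using a(2) by blast
    next
      fix A assume "A \<in> {\<beta>' ! Suc s |\<beta>'. \<beta>' \<in> S2 \<and> take (Suc s) \<beta>' = take (Suc s) \<beta>}"
      then obtain \<beta>' where b: "\<beta>' \<in> S2" "A = \<beta>' ! Suc s" "take (Suc s) \<beta>' = take (Suc s) \<beta>" by blast
      have "\<alpha> @ \<beta>' \<in> S" unfolding S_def using b that by blast
      moreover have "take (n + Suc s) (\<alpha> @ \<beta>') = take (n + Suc s) (\<alpha> @ \<beta>)"
        using l1[OF that(1)] b by simp
      moreover have "A = (\<alpha> @ \<beta>') ! (n + Suc s)" using l1[OF that(1)] b by (simp add: nth_append)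
      ultimately show "A \<in> {\<gamma> ! (n + Suc s) |\<gamma>. \<gamma> \<in> S \<and> take (n + Suc s) \<gamma> = take (n + Suc s) (\<alpha> @ \<beta>)}"
        by blast
    qed
  qed
  have PD: "Pset S (n+m) \<gamma> (n+m-1) = (\<lambda>\<gamma>. \<gamma> ! 0) ` S1" for \<gamma>
  proof -
    have "\<not> Suc (n+m-1) < n+m" by simp
    thus ?thesis using first by (simp add: Pset_ge)
  qed
  have Sspan: "spanning F Q \<A> G (n+m) S"
    unfolding spanning_def
  proof (intro conjI ballI allI impI)
    show "S \<subseteq> {\<alpha>. length \<alpha> = n + m \<and> set \<alpha> \<subseteq> \<A>}" unfolding S_def using l1 l2 by fastforce
    show "Q \<subseteq> \<Union> ((\<lambda>\<beta>. \<beta> ! 0) ` S)" unfolding first using S1(1) unfolding spanning_def by blast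
    fix \<gamma> t assume g: "\<gamma> \<in> S" and t: "Suc t < n + m"
    then obtain \<alpha> \<beta> where ab: "\<alpha> \<in> S1" "\<beta> \<in> S2" "\<gamma> = \<alpha> @ \<beta>" unfolding S_def by blast
    show "Fimg F (\<gamma> ! t) (G (\<gamma> ! t)) \<subseteq> \<Union> (Pset S (n + m) \<gamma> t)"
    proof (cases "Suc t < n")
      case True
      have e: "(\<alpha> @ \<beta>) ! t = \<alpha> ! t" using nth1[OF ab(1), of t \<beta>] True by simp
      show ?thesis unfolding ab(3) PA[OF ab(1) True] e using S1(1) ab(1) True
        unfolding spanning_def by blast
    next
      case False
      show ?thesis
      proof (cases "t = n - 1")
        case True
        have "\<gamma> ! t \<in> \<A>" using ab l1[OF ab(1)] True n nth1[OF ab(1)] by (metis diff_less less_numeral_extra(1) nth_mem subsetD)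
        hence "Fimg F (\<gamma> ! t) (G (\<gamma> ! t)) \<subseteq> Q" using ic unfolding invariant_cover_def by blast
        also have "Q \<subseteq> \<Union> ((\<lambda>\<gamma>. \<gamma> ! 0) ` S2)" using S2(1) unfolding spanning_def by blast
        finally show ?thesis unfolding ab(3) True PB[OF ab(1)] .
      next
        case False2: False
        define s where "s = t - n"
        have ts: "t = n + s" and s: "Suc s < m" using False False2 t unfolding s_def by auto
        show ?thesis unfolding ab(3) ts PC[OF ab(1,2) s] nth2[OF ab(1)] using S2(1) ab(2) s
          unfolding spanning_def by blast
      qed
    qed
  qed
  have prodeq: "(\<Prod>t<n+m. card (Pset S (n+m) (\<alpha>@\<beta>) t)) =
      (\<Prod>t<n. card (Pset S1 n \<alpha> t)) * (\<Prod>s<m. card (Pset S2 m \<beta> s))"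
    if ab: "\<alpha> \<in> S1" "\<beta> \<in> S2" for \<alpha> \<beta>
  proof -
    define f where "f t = card (Pset S (n+m) (\<alpha>@\<beta>) t)" for t
    obtain n' where n': "n = Suc n'" using n by (cases n) auto
    obtain m' where m': "m = Suc m'" using m by (cases m) auto
    have e1: "(\<Prod>t<n'. f t) = (\<Prod>t<n'. card (Pset S1 n \<alpha> t))"
      unfolding f_def by (rule prod.cong) (use PA[OF ab(1)] n' in auto)
    have e2: "f n' = card (Pset S2 m \<beta> m')" unfolding f_def
      using PB[OF ab(1), of \<beta>] n' m' by (simp add: Pset_ge)
    have e3: "(\<Prod>s<m'. f (n+s)) = (\<Prod>s<m'. card (Pset S2 m \<beta> s))"
      unfolding f_def by (rule prod.cong) (use PC[OF ab] m' in auto)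
    have e4: "f (n+m') = card (Pset S1 n \<alpha> n')" unfolding f_def
      using PD[of "\<alpha>@\<beta>"] n' m' by (simp add: Pset_ge)
    have "(\<Prod>t<n+m. f t) = (\<Prod>t<n. f t) * (\<Prod>s<m. f (n+s))" by (rule prod_split_add)
    also have "\<dots> = ((\<Prod>t<n'. f t) * f n') * ((\<Prod>s<m'. f (n+s)) * f (n+m'))"
      unfolding n' m' by simp
    also have "\<dots> = ((\<Prod>t<n'. card (Pset S1 n \<alpha> t)) * card (Pset S1 n \<alpha> n')) *
        ((\<Prod>s<m'. card (Pset S2 m \<beta> s)) * card (Pset S2 m \<beta> m'))"
      unfolding e1 e2 e3 e4 by (simp add: ac_simps)
    also have "\<dots> = (\<Prod>t<n. card (Pset S1 n \<alpha> t)) * (\<Prod>s<m. card (Pset S2 m \<beta> s))"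
      unfolding n' m' by simp
    finally show ?thesis unfolding f_def .
  qed
  have Sne: "S \<noteq> {}" using span_ne[OF Sspan Q] .
  have "Nspan S (n+m) \<le> Nspan S1 n * Nspan S2 m"
  proof -
    have "Max ((\<lambda>\<gamma>. \<Prod>t<n+m. card (Pset S (n+m) \<gamma> t)) ` S) \<le> Nspan S1 n * Nspan S2 m"
    proof (rule Max.boundedI)
      show "finite ((\<lambda>\<gamma>. \<Prod>t<n+m. card (Pset S (n+m) \<gamma> t)) ` S)"
        using finite_span[OF fin Sspan] by simp
      show "(\<lambda>\<gamma>. \<Prod>t<n+m. card (Pset S (n+m) \<gamma> t)) ` S \<noteq> {}" using Sne by simp
      fix x assume "x \<in> (\<lambda>\<gamma>. \<Prod>t<n+m. card (Pset S (n+m) \<gamma> t)) ` S"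
      then obtain \<alpha> \<beta> where ab: "\<alpha> \<in> S1" "\<beta> \<in> S2" "x = (\<Prod>t<n+m. card (Pset S (n+m) (\<alpha>@\<beta>) t))"
        unfolding S_def by blast
      show "x \<le> Nspan S1 n * Nspan S2 m" unfolding ab(3) prodeq[OF ab(1,2)]
        by (intro mult_le_mono Nspan_ge[OF fin S1(1) ab(1)] Nspan_ge[OF fin S2(1) ab(2)])
    qed
    thus ?thesis unfolding Nspan_def[of S] using Sne by simp
  qed
  thus ?thesis using r_inv_le[OF fin Sspan] S1(2) S2(2) by simp
qed



lemma h_conv:
  assumes ic: "invariant_cover F Q \<A> G" and Q: "Q \<noteq> {}"
  shows "(\<lambda>n. log 2 (real (r_inv F Q n \<A> G)) / real n) \<longlonglongrightarrow> h_inv F Q \<A> G"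
proof -
  define u where "u n = log 2 (real (r_inv F Q n \<A> G))" for n
  have pos: "1 \<le> real (r_inv F Q n \<A> G)" if "n \<ge> 1" for n
    using r_inv_pos[OF ic _ Q, of n] that by simp
  have "convergent (\<lambda>n. u n / n)"
  proof (rule fekete)
    fix n :: nat assume "n \<ge> 1" thus "0 \<le> u n" unfolding u_def using pos[of n] by simp
  next
    fix n m :: nat assume nm: "n \<ge> 1" "m \<ge> 1"
    have "real (r_inv F Q (n+m) \<A> G) \<le> real (r_inv F Q n \<A> G) * real (r_inv F Q m \<A> G)"
      using submult[OF ic Q, of n m] nm by (simp flip: of_nat_mult)
    hence "u (n+m) \<le> log 2 (real (r_inv F Q n \<A> G) * real (r_inv F Q m \<A> G))"
      unfolding u_def using pos[of "n+m"] nm by (subst log_le_cancel_iff) auto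
    also have "\<dots> = u n + u m" unfolding u_def using pos[of n] pos[of m] nm
      by (subst log_mult_pos) auto
    finally show "u (n+m) \<le> u n + u m" .
  qed
  thus ?thesis unfolding h_inv_def u_def by (simp add: convergent_LIMSEQ_iff)
qed

lemma h_empty:
  assumes ic: "invariant_cover F Q \<A> G" and Q: "Q = {}"
  shows "h_inv F Q \<A> G = 0"
proof -
  have fin: "finite \<A>" using ic unfolding invariant_cover_def by simp
  have "log 2 (real (r_inv F Q n \<A> G)) / real n = 0" for n
  proof (cases "n = 0")
    case False
    have "spanning F Q \<A> G n {}" unfolding spanning_def using Q by simp
    hence "r_inv F Q n \<A> G \<le> 0" using r_inv_le[OF fin] by (fastforce simp: Nspan_def)
    thus ?thesis by (simp add: log_def)
  qed simp
  hence "(\<lambda>n. log 2 (real (r_inv F Q n \<A> G)) / real n) = (\<lambda>n. 0)" by auto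
  thus ?thesis unfolding h_inv_def by (simp add: limI)
qed



lemma G_eq:
  assumes C1: "\<forall>a\<in>V. \<forall>b\<in>V. a \<noteq> b \<longrightarrow> Qsub F Q a \<inter> Qsub F Q b = {}"
    and C3: "\<forall>c. c \<notin> V \<longrightarrow> Qsub F Q c = {}"
    and GC: "\<forall>x\<in>Q. GC {x} \<in> V \<and> x \<in> Qsub F Q (GC {x})"
    and ic: "invariant_cover F Q \<A> G" and A: "A \<in> \<A>" and x: "x \<in> A"
  shows "G A = GC {x}" and "x \<in> Q" and "G A \<in> V"
proof -
  have xs: "x \<in> Qsub F Q (G A)" using inv_cover_sub[OF ic A] x by blast
  show "G A \<in> V" using C3 xs by blast
  show xQ: "x \<in> Q" using xs unfolding Qsub_def by blast
  show "G A = GC {x}"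
  proof (rule ccontr)
    assume ne: "G A \<noteq> GC {x}"
    have g: "GC {x} \<in> V" "x \<in> Qsub F Q (GC {x})" using GC xQ by auto
    have "Qsub F Q (G A) \<inter> Qsub F Q (GC {x}) = {}" using C1 \<open>G A \<in> V\<close> g(1) ne by blast
    thus False using xs g(2) by blast
  qed
qed

lemma card_lower:
  assumes finQ: "finite Q"
    and C1: "\<forall>a\<in>V. \<forall>b\<in>V. a \<noteq> b \<longrightarrow> Qsub F Q a \<inter> Qsub F Q b = {}"
    and C3: "\<forall>c. c \<notin> V \<longrightarrow> Qsub F Q c = {}"
    and GC: "\<forall>x\<in>Q. GC {x} \<in> V \<and> x \<in> Qsub F Q (GC {x})"
    and atom: "\<forall>a\<in>V. \<forall>b\<in>V. \<forall>x\<in>Qsub F Q a. card (F x a \<inter> Qsub F Q b) \<le> 1"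
    and ic: "invariant_cover F Q \<A> G" and A: "A \<in> \<A>" and x: "x \<in> A"
    and P: "finite P" "P \<subseteq> \<A>" "Fimg F A (G A) \<subseteq> \<Union>P"
  shows "card (F x (GC {x})) \<le> card P"
proof -
  note ge = G_eq[OF C1 C3 GC ic A x]
  have xQ: "x \<in> Q" by (rule ge(2))
  have "F x (G A) \<subseteq> Fimg F A (G A)" unfolding Fimg_def using x by blast
  hence sub: "F x (GC {x}) \<subseteq> \<Union>P" using P(3) unfolding ge(1) by blast
  define f where "f y = (SOME B. B \<in> P \<and> y \<in> B)" for y
  have f: "f y \<in> P \<and> y \<in> f y" if "y \<in> F x (GC {x})" for y
    unfolding f_def by (rule someI_ex) (use sub that in blast)
  have "inj_on f (F x (GC {x}))"
  proof (rule inj_onI)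
    fix y z assume y: "y \<in> F x (GC {x})" and z: "z \<in> F x (GC {x})" and e: "f y = f z"
    define B where "B = f y"
    have B: "B \<in> \<A>" "y \<in> B" "z \<in> B" using f[OF y] f[OF z] e P(2) unfolding B_def by auto
    note gb = G_eq[OF C1 C3 GC ic B(1) B(2)]
    have yz: "y \<in> Qsub F Q (G B)" "z \<in> Qsub F Q (G B)" using inv_cover_sub[OF ic B(1)] B by auto
    have "card (F x (GC {x}) \<inter> Qsub F Q (G B)) \<le> 1"
    proof -
      have g: "GC {x} \<in> V" "x \<in> Qsub F Q (GC {x})" using GC xQ by auto
      show ?thesis using atom g gb(3) by blast
    qed
    moreover have "finite (F x (GC {x}) \<inter> Qsub F Q (G B))"
      using finQ by (rule finite_subset[rotated]) (auto simp: Qsub_def)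
    ultimately have "\<forall>a1\<in>F x (GC {x}) \<inter> Qsub F Q (G B). \<forall>a2\<in>F x (GC {x}) \<inter> Qsub F Q (G B). a1 = a2"
      using card_le_Suc0_iff_eq by (metis One_nat_def)
    thus "y = z" using y z yz by blast
  qed
  moreover have "f ` F x (GC {x}) \<subseteq> P" using f by blast
  ultimately show ?thesis using P(1) by (rule card_inj_on_le)
qed


lemma rC_le:
  assumes nonempty: "\<forall>x u. F x u \<noteq> {}" and finQ: "finite Q" and Qne: "Q \<noteq> {}"
    and C1: "\<forall>a\<in>V. \<forall>b\<in>V. a \<noteq> b \<longrightarrow> Qsub F Q a \<inter> Qsub F Q b = {}"
    and C3: "\<forall>c. c \<notin> V \<longrightarrow> Qsub F Q c = {}"
    and GC: "\<forall>x\<in>Q. GC {x} \<in> V \<and> x \<in> Qsub F Q (GC {x})"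
    and atom: "\<forall>a\<in>V. \<forall>b\<in>V. \<forall>x\<in>Qsub F Q a. card (F x a \<inter> Qsub F Q b) \<le> 1"
    and ic: "invariant_cover F Q \<A> G" and n: "0 < n"
  shows "r_inv F Q n {{x} | x. x \<in> Q} GC \<le> card Q * r_inv F Q n \<A> G"
proof -
  define C where "C = {{x} | x. x \<in> Q}"
  have finC: "finite C" unfolding C_def using finQ by simp
  have FQ: "F p (GC {p}) \<subseteq> Q" if "p \<in> Q" for p using GC that unfolding Qsub_def by blast
  have finF: "finite (F p (GC {p}))" if "p \<in> Q" for p using FQ[OF that] finQ by (rule finite_subset)
  define step where "step p = (SOME z. z \<in> F p (GC {p}))" for p
  have step: "step p \<in> F p (GC {p})" for p
    unfolding step_def by (rule someI_ex) (use nonempty in blast)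
  have pathQ: "(step ^^ i) y \<in> Q" if "y \<in> Q" for i y
    by (induction i) (use that step FQ in auto)
  define traj where "traj x \<longleftrightarrow> (\<forall>i<n. x i \<in> Q) \<and> (\<forall>i. Suc i < n \<longrightarrow> x (Suc i) \<in> F (x i) (GC {x i}))"
    for x :: "nat \<Rightarrow> 'a"
  define SC where "SC = {map (\<lambda>i. {x i}) [0..<n] | x. traj x}"
  have ext: "traj (\<lambda>i. if i \<le> t then x i else (step ^^ (i - Suc t)) y)"
    if tx: "traj x" and t: "Suc t < n" and y: "y \<in> F (x t) (GC {x t})" for x t y
  proof -
    have xt: "x t \<in> Q" using tx t unfolding traj_def by simp
    have yQ: "y \<in> Q" using FQ[OF xt] y by blast
    show ?thesis unfolding traj_def
    proof (intro conjI allI impI)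
      fix i assume "i < n"
      thus "(if i \<le> t then x i else (step ^^ (i - Suc t)) y) \<in> Q"
        using tx pathQ[OF yQ] unfolding traj_def by auto
    next
      fix i assume i: "Suc i < n"
      consider "Suc i \<le> t" | "i = t" | "t < i" by linarith
      thus "(if Suc i \<le> t then x (Suc i) else (step ^^ (Suc i - Suc t)) y)
          \<in> F (if i \<le> t then x i else (step ^^ (i - Suc t)) y)
              (GC {if i \<le> t then x i else (step ^^ (i - Suc t)) y})"
      proof cases
        case 1 thus ?thesis using tx i unfolding traj_def by simp
      next
        case 2 thus ?thesis using y by simp
      next
        case 3
        hence "Suc i - Suc t = Suc (i - Suc t)" by simp
        thus ?thesis using 3 step by simp
      qed
    qed
  qed
  have inSC: "map (\<lambda>i. {x i}) [0..<n] \<in> SC" if "traj x" for x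
    unfolding SC_def using that by blast
  have mapnth: "map (\<lambda>i. {x i}) [0..<n] ! k = {x k}" if "k < n" for x k
    using that by simp
  have SCspan: "spanning F Q C GC n SC"
    unfolding spanning_def
  proof (intro conjI ballI allI impI)
    show "SC \<subseteq> {\<alpha>. length \<alpha> = n \<and> set \<alpha> \<subseteq> C}"
      unfolding SC_def C_def traj_def by auto
    show "Q \<subseteq> \<Union> ((\<lambda>\<beta>. \<beta> ! 0) ` SC)"
    proof
      fix y assume y: "y \<in> Q"
      have "traj (\<lambda>i. (step ^^ i) y)" unfolding traj_def using pathQ[OF y] step by simp
      hence "map (\<lambda>i. {(step ^^ i) y}) [0..<n] \<in> SC" by (rule inSC)
      moreover have "map (\<lambda>i. {(step ^^ i) y}) [0..<n] ! 0 = {y}" using n by simp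
      ultimately show "y \<in> \<Union> ((\<lambda>\<beta>. \<beta> ! 0) ` SC)" by (metis UnionI image_eqI singletonI)
    qed
    fix \<alpha> t assume \<alpha>: "\<alpha> \<in> SC" and t: "Suc t < n"
    then obtain x where x: "traj x" "\<alpha> = map (\<lambda>i. {x i}) [0..<n]" unfolding SC_def by blast
    have at: "\<alpha> ! t = {x t}" using x(2) t by simp
    show "Fimg F (\<alpha> ! t) (GC (\<alpha> ! t)) \<subseteq> \<Union> (Pset SC n \<alpha> t)"
    proof
      fix y assume "y \<in> Fimg F (\<alpha> ! t) (GC (\<alpha> ! t))"
      hence y: "y \<in> F (x t) (GC {x t})" unfolding at Fimg_def by simp
      define x' where "x' = (\<lambda>i. if i \<le> t then x i else (step ^^ (i - Suc t)) y)"
      have "traj x'" unfolding x'_def by (rule ext[OF x(1) t y])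
      hence "map (\<lambda>i. {x' i}) [0..<n] \<in> SC" by (rule inSC)
      moreover have "take (Suc t) (map (\<lambda>i. {x' i}) [0..<n]) = take (Suc t) \<alpha>"
        unfolding x(2) using t by (auto simp: x'_def take_map intro!: map_cong)
      moreover have "map (\<lambda>i. {x' i}) [0..<n] ! Suc t = {y}" using t by (simp add: x'_def)
      ultimately have "{y} \<in> Pset SC n \<alpha> t" unfolding Pset_lt[OF t] by (metis (mono_tags, lifting) mem_Collect_eq)
      thus "y \<in> \<Union> (Pset SC n \<alpha> t)" by blast
    qed
  qed
  have SCne: "SC \<noteq> {}" by (rule span_ne[OF SCspan Qne])
  have finSC: "finite SC" by (rule finite_span[OF finC SCspan])
  obtain \<alpha> where \<alpha>: "\<alpha> \<in> SC" "Nspan SC n = (\<Prod>t<n. card (Pset SC n \<alpha> t))"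
  proof -
    have "Max ((\<lambda>\<alpha>. \<Prod>t<n. card (Pset SC n \<alpha> t)) ` SC) \<in> (\<lambda>\<alpha>. \<Prod>t<n. card (Pset SC n \<alpha> t)) ` SC"
      by (rule Max_in) (use finSC SCne in auto)
    thus ?thesis using that unfolding Nspan_def using SCne by auto
  qed
  obtain x where x: "traj x" "\<alpha> = map (\<lambda>i. {x i}) [0..<n]" using \<alpha>(1) unfolding SC_def by blast
  obtain n' where n': "n = Suc n'" using n by (cases n) auto
  have cardPt: "card (Pset SC n \<alpha> t) \<le> card (F (x t) (GC {x t}))" if t: "t < n'" for t
  proof -
    have t': "Suc t < n" using t n' by simp
    have xt: "x t \<in> Q" using x(1) t' unfolding traj_def by simp
    have "Pset SC n \<alpha> t \<subseteq> (\<lambda>y. {y}) ` F (x t) (GC {x t})"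
    proof
      fix B assume "B \<in> Pset SC n \<alpha> t"
      then obtain \<beta> where b: "\<beta> \<in> SC" "B = \<beta> ! Suc t" "take (Suc t) \<beta> = take (Suc t) \<alpha>"
        unfolding Pset_lt[OF t'] by blast
      then obtain x' where x': "traj x'" "\<beta> = map (\<lambda>i. {x' i}) [0..<n]" unfolding SC_def by blast
      have "take (Suc t) \<beta> ! t = take (Suc t) \<alpha> ! t" using b(3) by simp
      hence "{x' t} = {x t}" using t' unfolding x'(2) x(2) by simp
      hence "x' t = x t" by simp
      moreover have "x' (Suc t) \<in> F (x' t) (GC {x' t})" using x'(1) t' unfolding traj_def by simp
      moreover have "B = {x' (Suc t)}" using b(2) x'(2) t' by simp
      ultimately show "B \<in> (\<lambda>y. {y}) ` F (x t) (GC {x t})" by simp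
    qed
    hence "card (Pset SC n \<alpha> t) \<le> card ((\<lambda>y. {y}) ` F (x t) (GC {x t}))"
      using finF[OF xt] by (intro card_mono) auto
    also have "\<dots> \<le> card (F (x t) (GC {x t}))" by (rule card_image_le[OF finF[OF xt]])
    finally show ?thesis .
  qed
  have cardPn: "card (Pset SC n \<alpha> n') \<le> card Q"
  proof -
    have "Pset SC n \<alpha> n' \<subseteq> C" using Pset_sub[OF SCspan, of n'] n' by simp
    also have "C = (\<lambda>y. {y}) ` Q" unfolding C_def by auto
    finally have "card (Pset SC n \<alpha> n') \<le> card ((\<lambda>y. {y}) ` Q)" using finQ by (intro card_mono) auto
    also have "\<dots> \<le> card Q" by (rule card_image_le[OF finQ])
    finally show ?thesis .
  qed
  have up: "r_inv F Q n C GC \<le> (\<Prod>t<n'. card (F (x t) (GC {x t}))) * card Q"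
  proof -
    have "r_inv F Q n C GC \<le> Nspan SC n" by (rule r_inv_le[OF finC SCspan])
    also have "\<dots> = (\<Prod>t<n'. card (Pset SC n \<alpha> t)) * card (Pset SC n \<alpha> n')" using \<alpha>(2) n' by simp
    also have "\<dots> \<le> (\<Prod>t<n'. card (F (x t) (GC {x t}))) * card Q"
      by (intro mult_le_mono prod_mono cardPn) (use cardPt in auto)
    finally show ?thesis .
  qed
  have finA: "finite \<A>" using ic unfolding invariant_cover_def by simp
  obtain S where S: "spanning F Q \<A> G n S" "r_inv F Q n \<A> G = Nspan S n"
    using r_inv_attained[OF finA spanning_all[OF ic n]] by blast
  have path: "\<exists>\<beta>\<in>S. \<forall>i<k. x i \<in> \<beta> ! i" if "0 < k" "k \<le> n" for k
    using that
  proof (induction k)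
    case 0 thus ?case by simp
  next
    case (Suc k)
    show ?case
    proof (cases "k = 0")
      case True
      have "x 0 \<in> Q" using x(1) n unfolding traj_def by simp
      then obtain \<beta> where "\<beta> \<in> S" "x 0 \<in> \<beta> ! 0" using S(1) unfolding spanning_def by blast
      thus ?thesis using True by auto
    next
      case False
      then obtain \<beta> where b: "\<beta> \<in> S" "\<forall>i<k. x i \<in> \<beta> ! i" using Suc by auto
      define t where "t = k - 1"
      have t: "Suc t < n" "Suc t = k" using False Suc.prems unfolding t_def by auto
      have A: "\<beta> ! t \<in> \<A>" using span_lists[OF S(1) b(1)] t by (metis Suc_lessD nth_mem subsetD)
      have xt: "x t \<in> \<beta> ! t" using b(2) t by auto
      have "G (\<beta> ! t) = GC {x t}" by (rule G_eq(1)[OF C1 C3 GC ic A xt])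
      moreover have "x k \<in> F (x t) (GC {x t})" using x(1) t unfolding traj_def by auto
      ultimately have "x k \<in> Fimg F (\<beta> ! t) (G (\<beta> ! t))" unfolding Fimg_def using xt by auto
      hence "x k \<in> \<Union> (Pset S n \<beta> t)" using S(1) b(1) t unfolding spanning_def by blast
      then obtain \<gamma> where g: "\<gamma> \<in> S" "take k \<gamma> = take k \<beta>" "x k \<in> \<gamma> ! k"
        unfolding Pset_lt[OF t(1)] t(2) by blast
      have "\<forall>i<k. \<gamma> ! i = \<beta> ! i"
      proof (intro allI impI)
        fix i assume "i < k"
        hence "take k \<gamma> ! i = \<gamma> ! i" "take k \<beta> ! i = \<beta> ! i" by simp_all
        thus "\<gamma> ! i = \<beta> ! i" using g(2) by simp
      qed
      hence "\<forall>i<Suc k. x i \<in> \<gamma> ! i" using b(2) g(3) by (auto simp: less_Suc_eq)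
      thus ?thesis using g(1) by blast
    qed
  qed
  obtain \<beta> where b: "\<beta> \<in> S" "\<forall>i<n. x i \<in> \<beta> ! i" using path[OF n order_refl] by blast
  have low: "card (F (x t) (GC {x t})) \<le> card (Pset S n \<beta> t)" if t: "t < n'" for t
  proof -
    have t': "Suc t < n" using t n' by simp
    have A: "\<beta> ! t \<in> \<A>" using span_lists[OF S(1) b(1)] t' by (metis Suc_lessD nth_mem subsetD)
    show ?thesis
    proof (rule card_lower[OF finQ C1 C3 GC atom ic A])
      show "x t \<in> \<beta> ! t" using b(2) t' by simp
      show "Pset S n \<beta> t \<subseteq> \<A>" using Pset_sub[OF S(1)] t' by simp
      thus "finite (Pset S n \<beta> t)" using finA by (rule finite_subset)
      show "Fimg F (\<beta> ! t) (G (\<beta> ! t)) \<subseteq> \<Union> (Pset S n \<beta> t)" using S(1) b(1) t' unfolding spanning_def by blast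
    qed
  qed
  have "(\<Prod>t<n'. card (F (x t) (GC {x t}))) \<le> (\<Prod>t<n'. card (Pset S n \<beta> t))"
    by (intro prod_mono) (use low in auto)
  also have "\<dots> \<le> (\<Prod>t<n'. card (Pset S n \<beta> t)) * card (Pset S n \<beta> n')"
    using Pset_card[OF finA S(1) b(1), of n'] n' by simp
  also have "\<dots> = (\<Prod>t<n. card (Pset S n \<beta> t))" unfolding n' by simp
  also have "\<dots> \<le> Nspan S n" by (rule Nspan_ge[OF finA S(1) b(1)])
  finally have "(\<Prod>t<n'. card (F (x t) (GC {x t}))) \<le> r_inv F Q n \<A> G" using S(2) by simp
  hence "r_inv F Q n C GC \<le> r_inv F Q n \<A> G * card Q" using up
    by (meson le_trans mult_le_mono1)
  thus ?thesis unfolding C_def by (simp add: mult.commute)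
qed


theorem theorem3p13:
  fixes F :: "'x \<Rightarrow> 'u \<Rightarrow> 'x set" and Q :: "'x set" and V :: "'u set"
    and GC :: "'x set \<Rightarrow> 'u"
  assumes nonempty: "\<forall>x u. F x u \<noteq> {}"
    and ci: "controlled_invariant F Q"
    and finQ: "finite Q"
    and finV: "finite V"
    and cov: "is_cover F Q V"
    and C1: "\<forall>a\<in>V. \<forall>b\<in>V. a \<noteq> b \<longrightarrow> Qsub F Q a \<inter> Qsub F Q b = {}"
    and C2: "\<forall>a\<in>V. \<forall>b\<in>V. admissible F Q a b \<longrightarrow>
               (\<exists>K. K \<subseteq> Qsub F Q a \<and> Qsub F Q b \<subseteq> Fimg F K a)"
    and C3: "\<forall>c. c \<notin> V \<longrightarrow> Qsub F Q c = {}"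
    and GC: "\<forall>x\<in>Q. GC {x} \<in> V \<and> x \<in> Qsub F Q (GC {x})"
    and atom: "\<forall>a\<in>V. \<forall>b\<in>V. \<forall>x\<in>Qsub F Q a. card (F x a \<inter> Qsub F Q b) \<le> 1"
  shows "h_fb_inv F Q = h_inv F Q {{x} | x. x \<in> Q} GC"
  proof -
  let ?C = "{{x} | x. x \<in> Q}"
  have icC: "invariant_cover F Q ?C GC"
    unfolding invariant_cover_def
  proof (intro conjI ballI)
    have "?C = (\<lambda>x. {x}) ` Q" by auto
    thus "finite ?C" using finQ by simp
    show "Q \<subseteq> \<Union> ?C" by blast
    fix A assume "A \<in> ?C"
    then obtain x where x: "x \<in> Q" "A = {x}" by blast
    show "A \<subseteq> Q" using x by simp
    show "Fimg F A (GC A) \<subseteq> Q" using GC x unfolding Fimg_def Qsub_def by auto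
  qed
  define H where "H = {h_inv F Q \<A> G | \<A> G. invariant_cover F Q \<A> G}"
  have mem: "h_inv F Q ?C GC \<in> H" unfolding H_def using icC by blast
  have le: "h_inv F Q ?C GC \<le> h_inv F Q \<A> G" if ic: "invariant_cover F Q \<A> G" for \<A> G
  proof (cases "Q = {}")
    case True
    thus ?thesis using h_empty[OF icC True] h_empty[OF ic True] by simp
  next
    case False
    have "h_inv F Q ?C GC \<le> 0 + h_inv F Q \<A> G"
    proof (rule LIMSEQ_le[OF h_conv[OF icC False] tendsto_add[OF lim_const_over_n h_conv[OF ic False]]])
      show "\<exists>N. \<forall>n\<ge>N. log 2 (real (r_inv F Q n ?C GC)) / real n
          \<le> log 2 (real (card Q)) / real n + log 2 (real (r_inv F Q n \<A> G)) / real n"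
      proof (intro exI[of _ 1] allI impI)
        fix n :: nat assume n: "1 \<le> n"
        have p1: "1 \<le> real (r_inv F Q n ?C GC)" using r_inv_pos[OF icC _ False, of n] n by simp
        have p2: "1 \<le> real (r_inv F Q n \<A> G)" using r_inv_pos[OF ic _ False, of n] n by simp
        have cq: "1 \<le> real (card Q)" using False finQ by (simp add: Suc_leI card_gt_0_iff)
        have "real (r_inv F Q n ?C GC) \<le> real (card Q) * real (r_inv F Q n \<A> G)"
          using rC_le[OF nonempty finQ False C1 C3 GC atom ic, of n] n by (simp flip: of_nat_mult)
        hence "log 2 (real (r_inv F Q n ?C GC)) \<le> log 2 (real (card Q) * real (r_inv F Q n \<A> G))"
          using p1 cq p2 by (subst log_le_cancel_iff) auto
        also have "\<dots> = log 2 (real (card Q)) + log 2 (real (r_inv F Q n \<A> G))"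
          using cq p2 by (subst log_mult_pos) auto
        finally have "log 2 (real (r_inv F Q n ?C GC)) / real n
            \<le> (log 2 (real (card Q)) + log 2 (real (r_inv F Q n \<A> G))) / real n"
          using n by (intro divide_right_mono) auto
        thus "log 2 (real (r_inv F Q n ?C GC)) / real n
          \<le> log 2 (real (card Q)) / real n + log 2 (real (r_inv F Q n \<A> G)) / real n"
          by (simp add: add_divide_distrib)
      qed
    qed
    thus ?thesis by simp
  qed
  show ?thesis unfolding h_fb_inv_def H_def[symmetric]
    by (rule cInf_eq_minimum[OF mem]) (use le in \<open>auto simp: H_def\<close>)
qed

end
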